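(* Let $W$ be the Witt algebra with basis $\{x_n\mid n\in\mathbb{Z}\}$ and bracket $[x_m,x_n]=(n-m)x_{m+n}$. Let $(V_1,\cdot)$ and $(V_2,* )$ be left-symmetric algebra structures on the underlying space of $W$, each with commutator equal to the bracket of $W$, given by $x_m\cdot x_n=f_1(m,n)x_{m+n}$ and $x_m*x_n=f_2(m,n)x_{m+n}$. If $V_1$ and $V_2$ are isomorphic as left-symmetric algebras, then either $f_1(m,n)=f_2(m,n)$ for all $m,n$, or $f_1(m,n)=-f_2(-m,-n)$ for all $m,n$.
   Context: A left-symmetric algebra is a vector space with bilinear product satisfying $(xy)z-x(yz)=(yx)z-y(xz)$ for all $x,y,z$. *)

theory Defs
  imports Complex_Main
begin

text \<open>The underlying space of the Witt algebra over the complex numbers: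
  finitely supported coefficient functions; the function a represents
  the finite sum of a n times x_n over n.\<close>
definition witt_space :: "(int \<Rightarrow> complex) set" where
  "witt_space = {a. finite {n. a n \<noteq> 0}}"

text \<open>Bilinear product determined on the basis by x_m x_n = f(m,n) x_(m+n).\<close>
definition graded_mult ::
  "(int \<Rightarrow> int \<Rightarrow> complex) \<Rightarrow> (int \<Rightarrow> complex) \<Rightarrow> (int \<Rightarrow> complex) \<Rightarrow> (int \<Rightarrow> complex)" where
  "graded_mult f a b = (\<lambda>k. \<Sum>m\<in>{n. a n \<noteq> 0}. a m * b (k - m) * f m (k - m))"

definition witt_bracket :: "(int \<Rightarrow> complex) \<Rightarrow> (int \<Rightarrow> complex) \<Rightarrow> (int \<Rightarrow> complex)" where
  "witt_bracket = graded_mult (\<lambda>m n. of_int (n - m))"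

definition compatible_LSA_on_witt :: "(int \<Rightarrow> int \<Rightarrow> complex) \<Rightarrow> bool" where
  "compatible_LSA_on_witt f \<longleftrightarrow>
     (\<forall>x\<in>witt_space. \<forall>y\<in>witt_space. \<forall>z\<in>witt_space.
        (\<forall>k. graded_mult f (graded_mult f x y) z k - graded_mult f x (graded_mult f y z) k
      = graded_mult f (graded_mult f y x) z k - graded_mult f y (graded_mult f x z) k)) \<and>
     (\<forall>x\<in>witt_space. \<forall>y\<in>witt_space.
        (\<forall>k. graded_mult f x y k - graded_mult f y x k = witt_bracket x y k))"

definition LSA_isomorphic :: "(int \<Rightarrow> int \<Rightarrow> complex) \<Rightarrow> (int \<Rightarrow> int \<Rightarrow> complex) \<Rightarrow> bool" where
  "LSA_isomorphic f1 f2 \<longleftrightarrow>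
     (\<exists>\<phi>. bij_betw \<phi> witt_space witt_space \<and>
        (\<forall>x\<in>witt_space. \<forall>y\<in>witt_space. \<phi> (\<lambda>n. x n + y n) = (\<lambda>n. \<phi> x n + \<phi> y n)) \<and>
        (\<forall>c. \<forall>x\<in>witt_space. \<phi> (\<lambda>n. c * x n) = (\<lambda>n. c * \<phi> x n)) \<and>
        (\<forall>x\<in>witt_space. \<forall>y\<in>witt_space.
           \<phi> (graded_mult f1 x y) = graded_mult f2 (\<phi> x) (\<phi> y)))"

end

theory Submission imports Defs begin

definition ee :: "int \<Rightarrow> int \<Rightarrow> complex" where
  "ee n = (\<lambda>k. if k = n then 1 else 0)"

definition islin :: "((int \<Rightarrow> complex) \<Rightarrow> (int \<Rightarrow> complex)) \<Rightarrow> bool" where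
  "islin \<phi> \<longleftrightarrow> (\<forall>x\<in>witt_space. \<forall>y\<in>witt_space. \<phi> (\<lambda>n. x n + y n) = (\<lambda>n. \<phi> x n + \<phi> y n)) \<and>
        (\<forall>c. \<forall>x\<in>witt_space. \<phi> (\<lambda>n. c * x n) = (\<lambda>n. c * \<phi> x n))"

lemma ee_ws: "ee n \<in> witt_space"
  unfolding witt_space_def ee_def by simp

lemma ws_scale: "x \<in> witt_space \<Longrightarrow> (\<lambda>k. c * x k) \<in> witt_space"
  unfolding witt_space_def by (auto elim: finite_subset[rotated])

lemma ws_add: "x \<in> witt_space \<Longrightarrow> y \<in> witt_space \<Longrightarrow> (\<lambda>k. x k + y k) \<in> witt_space"
proof -
  assume a: "x \<in> witt_space" "y \<in> witt_space"
  have "{k. x k + y k \<noteq> 0} \<subseteq> {k. x k \<noteq> 0} \<union> {k. y k \<noteq> 0}" by auto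
  then show ?thesis using a unfolding witt_space_def by (auto elim: finite_subset)
qed

lemma ws_sum: "finite F \<Longrightarrow> (\<lambda>k. \<Sum>n\<in>F. c n * ee n k) \<in> witt_space"
proof -
  assume F: "finite F"
  have "{k. (\<Sum>n\<in>F. c n * ee n k) \<noteq> 0} \<subseteq> F"
  proof
    fix k assume "k \<in> {k. (\<Sum>n\<in>F. c n * ee n k) \<noteq> 0}"
    then obtain n where "n \<in> F" "c n * ee n k \<noteq> 0" by (meson mem_Collect_eq sum.neutral)
    then show "k \<in> F" by (auto simp: ee_def split: if_splits)
  qed
  then show ?thesis using F unfolding witt_space_def by (auto elim: finite_subset)
qed

lemma gm_single: "graded_mult f (\<lambda>k. a * ee m k) y k = a * y (k-m) * f m (k-m)"
proof (cases "a = 0")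
  case True then show ?thesis by (simp add: graded_mult_def)
next
  case False
  then have "{n. a * ee m n \<noteq> 0} = {m}" by (auto simp: ee_def)
  then show ?thesis by (simp add: graded_mult_def ee_def)
qed

lemma gm_ee: "graded_mult f (ee m) y k = y (k-m) * f m (k-m)"
  using gm_single[of f 1 m y k] by simp

lemma gm_basis: "graded_mult f (ee m) (ee n) = (\<lambda>k. f m n * ee (m+n) k)"
  by (rule ext) (unfold gm_ee, auto simp: ee_def)

lemma wb_formula: "witt_bracket a b k = (\<Sum>j\<in>{n. a n \<noteq> 0}. a j * b (k-j) * of_int (k-j-j))"
  by (simp add: witt_bracket_def graded_mult_def)

lemma compat_basis:
  assumes "compatible_LSA_on_witt f"
  shows "f m n - f n m = of_int (n - m)"
proof -
  have "graded_mult f (ee m) (ee n) (m+n) - graded_mult f (ee n) (ee m) (m+n) = witt_bracket (ee m) (ee n) (m+n)"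
    using assms ee_ws unfolding compatible_LSA_on_witt_def by blast
  then show ?thesis unfolding witt_bracket_def gm_ee by (simp add: ee_def)
qed

lemma lin_add: "islin \<phi> \<Longrightarrow> x \<in> witt_space \<Longrightarrow> y \<in> witt_space \<Longrightarrow> \<phi> (\<lambda>n. x n + y n) = (\<lambda>n. \<phi> x n + \<phi> y n)"
  by (simp add: islin_def)

lemma lin_scale: "islin \<phi> \<Longrightarrow> x \<in> witt_space \<Longrightarrow> \<phi> (\<lambda>n. c * x n) = (\<lambda>n. c * \<phi> x n)"
  by (simp add: islin_def)

lemma lin_zero: "islin \<phi> \<Longrightarrow> \<phi> (\<lambda>k. 0) = (\<lambda>k. 0)"
proof -
  assume "islin \<phi>"
  have z: "(\<lambda>k. 0::complex) \<in> witt_space" unfolding witt_space_def by simp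
  have "\<phi> (\<lambda>n. 0 * (\<lambda>k. 0) n) = (\<lambda>n. 0 * \<phi> (\<lambda>k. 0) n)"
    by (rule lin_scale[OF \<open>islin \<phi>\<close> z])
  then show ?thesis by simp
qed

lemma lin_sum:
  assumes "islin \<phi>" "finite F"
  shows "\<phi> (\<lambda>k. \<Sum>n\<in>F. c n * ee n k) = (\<lambda>k. \<Sum>n\<in>F. c n * \<phi> (ee n) k)"
  using assms(2)
proof (induction F rule: finite_induct)
  case empty then show ?case using lin_zero[OF assms(1)] by simp
next
  case (insert a F)
  have e: "(\<lambda>k. \<Sum>n\<in>insert a F. c n * ee n k) = (\<lambda>k. (\<lambda>k. c a * ee a k) k + (\<lambda>k. \<Sum>n\<in>F. c n * ee n k) k)"
    using insert by simp
  have "\<phi> (\<lambda>k. (\<lambda>k. c a * ee a k) k + (\<lambda>k. \<Sum>n\<in>F. c n * ee n k) k)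
      = (\<lambda>k. \<phi> (\<lambda>k. c a * ee a k) k + \<phi> (\<lambda>k. \<Sum>n\<in>F. c n * ee n k) k)"
    by (rule lin_add[OF assms(1) ws_scale[OF ee_ws] ws_sum[OF insert(1)]])
  also have "\<phi> (\<lambda>k. c a * ee a k) = (\<lambda>k. c a * \<phi> (ee a) k)"
    by (rule lin_scale[OF assms(1) ee_ws])
  finally show ?case using insert by (simp add: e)
qed

lemma expand: "x \<in> witt_space \<Longrightarrow> x = (\<lambda>k. \<Sum>n\<in>{n. x n \<noteq> 0}. x n * ee n k)"
proof (rule ext)
  fix k assume "x \<in> witt_space"
  have "(\<Sum>n\<in>{n. x n \<noteq> 0}. x n * ee n k) = (\<Sum>n\<in>{n. x n \<noteq> 0}. if k = n then x n else 0)"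
    by (rule sum.cong) (auto simp: ee_def)
  also have "\<dots> = x k" using \<open>x \<in> witt_space\<close> unfolding witt_space_def by (simp add: sum.delta)
  finally show "x k = (\<Sum>n\<in>{n. x n \<noteq> 0}. x n * ee n k)" by simp
qed

lemma phi_expand:
  assumes "islin \<phi>" "x \<in> witt_space"
  shows "\<phi> x = (\<lambda>k. \<Sum>n\<in>{n. x n \<noteq> 0}. x n * \<phi> (ee n) k)"
proof -
  have "\<phi> x = \<phi> (\<lambda>k. \<Sum>n\<in>{n. x n \<noteq> 0}. x n * ee n k)" using expand[OF assms(2)] by simp
  also have "\<dots> = (\<lambda>k. \<Sum>n\<in>{n. x n \<noteq> 0}. x n * \<phi> (ee n) k)" by (rule lin_sum[OF assms(1)]) (use assms(2) in \<open>simp add: witt_space_def\<close>)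
  finally show ?thesis .
qed

lemma diag:
  fixes b :: "int \<Rightarrow> complex"
  assumes nz: "\<And>n. b n \<noteq> 0" and m: "\<And>m n. m \<noteq> n \<Longrightarrow> b (m+n) = b m * b n"
  shows "b (m+n) = b m * b n"
proof (cases "m = n")
  case False then show ?thesis using m by simp
next
  case True
  have b0: "b 0 = 1" using m[of 0 1] nz[of 1] by simp
  have sq: "b (2*k) = b k * b k" for k
  proof (cases "k = 1")
    case False
    have "2*k \<noteq> (1::int)" by presburger
    then have "b (2*k) * b 1 = b (2*k+1)" using m[of "2*k" 1] by simp
    also have "\<dots> = b k * b (k+1)" using m[of k "k+1"] by (simp add: algebra_simps)
    also have "\<dots> = b k * b k * b 1" using m[of k 1] False by simp
    finally show ?thesis using nz[of 1] by simp
  next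
    case True
    have b3: "b 3 = b 2 * b 1" using m[of 2 1] by simp
    have b4: "b 4 = b 1 * b 3" using m[of 1 3] by simp
    have "b 5 = b 2 * b 3" using m[of 2 3] by simp
    moreover have "b 5 = b 1 * b 4" using m[of 1 4] by simp
    ultimately have "b 2 * b 3 = b 1 * b 4" by simp
    then have "b 2 * (b 2 * b 1) = b 1 * (b 1 * (b 2 * b 1))" by (simp only: b3 b4)
    then have "b 2 * (b 2 * b 1) = b 2 * (b 1 * b 1 * b 1)" by (simp only: ac_simps)
    then have "b 2 * b 1 = b 1 * b 1 * b 1" using mult_left_cancel[OF nz[of 2]] by blast
    then have "b 2 = b 1 * b 1" using mult_right_cancel[OF nz[of 1]] by blast
    then show ?thesis using True by simp
  qed
  have "n + n = 2 * n" by simp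
  then show ?thesis using True sq[of n] by simp
qed


lemma top_deg:
  fixes h v :: "int \<Rightarrow> complex"
  assumes hf: "finite {j. h j \<noteq> 0}" and vf: "finite {j. v j \<noteq> 0}"
    and hK: "h K \<noteq> 0" and Kmax: "\<forall>j. h j \<noteq> 0 \<longrightarrow> j \<le> K" and Kpos: "K > 0"
    and vnz: "v \<noteq> (\<lambda>k. 0)"
    and eig: "witt_bracket h v = (\<lambda>k. c * v k)"
  shows "\<forall>k>K. v k = 0"
proof -
  define T where "T = {j. v j \<noteq> 0}"
  have Tne: "T \<noteq> {}" using vnz unfolding T_def by auto
  define p where "p = Max T"
  have fT: "finite T" using vf unfolding T_def .
  have "p \<in> T" unfolding p_def by (rule Max_in[OF fT Tne])
  then have vp: "v p \<noteq> 0" unfolding T_def by simp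
  have pmax: "v j \<noteq> 0 \<Longrightarrow> j \<le> p" for j using vf unfolding p_def T_def by simp
  define S where "S = {j. h j \<noteq> 0}"
  have KS: "K \<in> S" using hK unfolding S_def by simp
  have "witt_bracket h v (K+p) = (\<Sum>j\<in>S. h j * v (K+p-j) * of_int (K+p-j-j))"
    unfolding wb_formula S_def ..
  also have "\<dots> = h K * v (K+p-K) * of_int (K+p-K-K) + (\<Sum>j\<in>S-{K}. h j * v (K+p-j) * of_int (K+p-j-j))"
    using sum.remove[OF _ KS] hf unfolding S_def by blast
  also have "(\<Sum>j\<in>S-{K}. h j * v (K+p-j) * of_int (K+p-j-j)) = 0"
  proof (rule sum.neutral, rule ballI)
    fix j assume "j \<in> S - {K}"
    then have "j < K" using Kmax unfolding S_def by force
    then have "v (K+p-j) = 0" using pmax[of "K+p-j"] by force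
    then show "h j * v (K+p-j) * of_int (K+p-j-j) = 0" by simp
  qed
  finally have e: "witt_bracket h v (K+p) = h K * v p * of_int (p - K)" by simp
  have "v (K+p) = 0" using pmax[of "K+p"] Kpos by force
  then have "h K * v p * of_int (p - K) = 0" using e eig by (metis mult_zero_right)
  then have "p = K" using hK vp by simp
  then show ?thesis using pmax by force
qed

lemma bot_deg:
  fixes h v :: "int \<Rightarrow> complex"
  assumes hf: "finite {j. h j \<noteq> 0}" and vf: "finite {j. v j \<noteq> 0}"
    and hK: "h K \<noteq> 0" and Kmin: "\<forall>j. h j \<noteq> 0 \<longrightarrow> K \<le> j" and Kneg: "K < 0"
    and vnz: "v \<noteq> (\<lambda>k. 0)"
    and eig: "witt_bracket h v = (\<lambda>k. c * v k)"
  shows "\<forall>k<K. v k = 0"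
proof -
  define T where "T = {j. v j \<noteq> 0}"
  have Tne: "T \<noteq> {}" using vnz unfolding T_def by auto
  define p where "p = Min T"
  have fT: "finite T" using vf unfolding T_def .
  have "p \<in> T" unfolding p_def by (rule Min_in[OF fT Tne])
  then have vp: "v p \<noteq> 0" unfolding T_def by simp
  have pmin: "v j \<noteq> 0 \<Longrightarrow> p \<le> j" for j using vf unfolding p_def T_def by simp
  define S where "S = {j. h j \<noteq> 0}"
  have KS: "K \<in> S" using hK unfolding S_def by simp
  have "witt_bracket h v (K+p) = (\<Sum>j\<in>S. h j * v (K+p-j) * of_int (K+p-j-j))"
    unfolding wb_formula S_def ..
  also have "\<dots> = h K * v (K+p-K) * of_int (K+p-K-K) + (\<Sum>j\<in>S-{K}. h j * v (K+p-j) * of_int (K+p-j-j))"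
    using sum.remove[OF _ KS] hf unfolding S_def by blast
  also have "(\<Sum>j\<in>S-{K}. h j * v (K+p-j) * of_int (K+p-j-j)) = 0"
  proof (rule sum.neutral, rule ballI)
    fix j assume "j \<in> S - {K}"
    then have "K < j" using Kmin unfolding S_def by force
    then have "v (K+p-j) = 0" using pmin[of "K+p-j"] by force
    then show "h j * v (K+p-j) * of_int (K+p-j-j) = 0" by simp
  qed
  finally have e: "witt_bracket h v (K+p) = h K * v p * of_int (p - K)" by simp
  have "v (K+p) = 0" using pmin[of "K+p"] Kneg by force
  then have "h K * v p * of_int (p - K) = 0" using e eig by (metis mult_zero_right)
  then have "p = K" using hK vp by simp
  then show ?thesis using pmin by force
qed


theorem proposition3p10:
  fixes f1 f2 :: "int \<Rightarrow> int \<Rightarrow> complex"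
  assumes "compatible_LSA_on_witt f1"
    and "compatible_LSA_on_witt f2"
    and "LSA_isomorphic f1 f2"
  shows "(\<forall>m n. f1 m n = f2 m n) \<or> (\<forall>m n. f1 m n = - f2 (- m) (- n))"
proof -
  obtain \<phi> where bij: "bij_betw \<phi> witt_space witt_space"
    and add: "\<forall>x\<in>witt_space. \<forall>y\<in>witt_space. \<phi> (\<lambda>n. x n + y n) = (\<lambda>n. \<phi> x n + \<phi> y n)"
    and smul: "\<forall>c. \<forall>x\<in>witt_space. \<phi> (\<lambda>n. c * x n) = (\<lambda>n. c * \<phi> x n)"
    and hom: "\<forall>x\<in>witt_space. \<forall>y\<in>witt_space. \<phi> (graded_mult f1 x y) = graded_mult f2 (\<phi> x) (\<phi> y)"
    using assms(3) unfolding LSA_isomorphic_def by blast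
  have lin: "islin \<phi>" using add smul unfolding islin_def by blast
  note c1 = compat_basis[OF assms(1)] and c2 = compat_basis[OF assms(2)]
  have phiws: "\<phi> x \<in> witt_space" if "x \<in> witt_space" for x
    using bij_betw_apply[OF bij that] .
  have zws: "(\<lambda>k. 0::complex) \<in> witt_space" unfolding witt_space_def by simp
  have vnz: "\<phi> (ee n) \<noteq> (\<lambda>k. 0)" for n
  proof
    assume "\<phi> (ee n) = (\<lambda>k. 0)"
    then have "\<phi> (ee n) = \<phi> (\<lambda>k. 0)" using lin_zero[OF lin] by simp
    then have "ee n = (\<lambda>k. 0)" using bij_betw_imp_inj_on[OF bij] ee_ws zws by (meson inj_onD)
    then have "ee n n = 0" by simp
    then show False by (simp add: ee_def)
  qed
  have vf: "finite {k. \<phi> (ee n) k \<noteq> 0}" for n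
    using phiws[OF ee_ws] unfolding witt_space_def by simp
  have surj: "\<exists>x\<in>witt_space. \<phi> x = y" if "y \<in> witt_space" for y
    using bij that unfolding bij_betw_def by (metis imageE)
  define h where "h = \<phi> (ee 0)"
  have hws: "h \<in> witt_space" unfolding h_def by (rule phiws[OF ee_ws])
  have eig: "witt_bracket h (\<phi> (ee n)) = (\<lambda>k. of_int n * \<phi> (ee n) k)" for n
  proof (rule ext)
    fix k
    define v where "v = \<phi> (ee n)"
    have vws: "v \<in> witt_space" unfolding v_def by (rule phiws[OF ee_ws])
    have A: "\<phi> (graded_mult f1 (ee 0) (ee n)) = graded_mult f2 h v"
      using hom ee_ws unfolding h_def v_def by blast
    have B: "\<phi> (graded_mult f1 (ee n) (ee 0)) = graded_mult f2 v h"
      using hom ee_ws unfolding h_def v_def by blast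
    have A': "\<phi> (graded_mult f1 (ee 0) (ee n)) = (\<lambda>k. f1 0 n * v k)"
      unfolding gm_basis v_def using lin_scale[OF lin ee_ws] by simp
    have B': "\<phi> (graded_mult f1 (ee n) (ee 0)) = (\<lambda>k. f1 n 0 * v k)"
      unfolding gm_basis v_def using lin_scale[OF lin ee_ws] by simp
    have "graded_mult f2 h v k - graded_mult f2 v h k = witt_bracket h v k"
      using assms(2) hws vws unfolding compatible_LSA_on_witt_def by blast
    then have "witt_bracket h v k = f1 0 n * v k - f1 n 0 * v k"
      using A A' B B' by metis
    also have "\<dots> = (f1 0 n - f1 n 0) * v k" by (simp add: algebra_simps)
    also have "\<dots> = of_int n * v k" using c1[of 0 n] by simp
    finally show "witt_bracket h (\<phi> (ee n)) k = of_int n * \<phi> (ee n) k" unfolding v_def .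
  qed
  have hf: "finite {j. h j \<noteq> 0}" using hws unfolding witt_space_def by simp
  have hnz: "h \<noteq> (\<lambda>k. 0)" unfolding h_def by (rule vnz)
  define S where "S = {j. h j \<noteq> 0}"
  have Sne: "S \<noteq> {}" using hnz unfolding S_def by auto
  have fS: "finite S" using hf unfolding S_def .
  define K where "K = Max S"
  define L where "L = Min S"
  have hK: "h K \<noteq> 0" using Max_in[OF fS Sne] unfolding K_def S_def by simp
  have hL: "h L \<noteq> 0" using Min_in[OF fS Sne] unfolding L_def S_def by simp
  have Kmax: "\<forall>j. h j \<noteq> 0 \<longrightarrow> j \<le> K" using fS unfolding K_def S_def by simp
  have Lmin: "\<forall>j. h j \<noteq> 0 \<longrightarrow> L \<le> j" using fS unfolding L_def S_def by simp
  have K0: "K \<le> 0"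
  proof (rule ccontr)
    assume "\<not> K \<le> 0"
    then have Kp: "K > 0" by simp
    have all: "\<forall>k>K. \<phi> (ee n) k = 0" for n
      by (rule top_deg[OF hf vf hK Kmax Kp vnz eig])
    obtain x where xws: "x \<in> witt_space" and x: "\<phi> x = ee (K+1)" using surj[OF ee_ws] by blast
    have "\<phi> x (K+1) = (\<Sum>n\<in>{n. x n \<noteq> 0}. x n * \<phi> (ee n) (K+1))"
      using phi_expand[OF lin xws] by simp
    also have "\<dots> = 0" using all by simp
    finally show False using x by (simp add: ee_def)
  qed
  have L0: "L \<ge> 0"
  proof (rule ccontr)
    assume "\<not> L \<ge> 0"
    then have Lp: "L < 0" by simp
    have all: "\<forall>k<L. \<phi> (ee n) k = 0" for n
      by (rule bot_deg[OF hf vf hL Lmin Lp vnz eig])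
    obtain x where xws: "x \<in> witt_space" and x: "\<phi> x = ee (L-1)" using surj[OF ee_ws] by blast
    have "\<phi> x (L-1) = (\<Sum>n\<in>{n. x n \<noteq> 0}. x n * \<phi> (ee n) (L-1))"
      using phi_expand[OF lin xws] by simp
    also have "\<dots> = 0" using all by simp
    finally show False using x by (simp add: ee_def)
  qed
  have S0: "S = {0}"
  proof -
    have "S \<subseteq> {0}" using Kmax Lmin K0 L0 unfolding S_def by force
    then show ?thesis using Sne by blast
  qed
  define c where "c = h 0"
  have br: "witt_bracket h v k = c * v k * of_int k" for v k
    unfolding wb_formula using S0 unfolding S_def c_def by simp
  have ev: "of_int n = c * of_int k" if "\<phi> (ee n) k \<noteq> 0" for n k
  proof -
    have "of_int n * \<phi> (ee n) k = c * \<phi> (ee n) k * of_int k"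
      using eig[of n] br[of "\<phi> (ee n)" k] by metis
    then have "\<phi> (ee n) k * of_int n = \<phi> (ee n) k * (c * of_int k)" by (simp add: algebra_simps)
    then show ?thesis using that by simp
  qed
  obtain k1 where k1: "\<phi> (ee 1) k1 \<noteq> 0" using vnz[of 1] by auto
  have ck1: "1 = c * of_int k1" using ev[OF k1] by simp
  obtain x where xws: "x \<in> witt_space" and x: "\<phi> x = ee 1" using surj[OF ee_ws] by blast
  have "(\<Sum>n\<in>{n. x n \<noteq> 0}. x n * \<phi> (ee n) 1) = 1"
    using phi_expand[OF lin xws] x by (metis ee_def)
  then obtain n0 where "\<phi> (ee n0) 1 \<noteq> 0" by (metis (no_types, lifting) mult_zero_right sum.neutral zero_neq_one)
  then have cn0: "c = of_int n0" using ev by fastforce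
  have "of_int (n0 * k1) = (1::complex)" using ck1 cn0 by simp
  then have "n0 * k1 = 1" by (metis of_int_eq_1_iff)
  then have eps: "n0 = 1 \<or> n0 = -1" unfolding zmult_eq_1_iff by blast
  define \<epsilon> where "\<epsilon> = n0"
  have e2: "\<epsilon> * \<epsilon> = 1" using eps unfolding \<epsilon>_def by auto
  have e2c: "of_int \<epsilon> * of_int \<epsilon> = (1::complex)" using e2 by (metis of_int_1 of_int_mult)
  have supp: "k = \<epsilon> * n" if "\<phi> (ee n) k \<noteq> 0" for n k
  proof -
    have "of_int n = (of_int (\<epsilon> * k) :: complex)" using ev[OF that] cn0 unfolding \<epsilon>_def by simp
    then have "n = \<epsilon> * k" by (simp only: of_int_eq_iff)
    then have "\<epsilon> * n = (\<epsilon> * \<epsilon>) * k" by simp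
    then show ?thesis using e2 by simp
  qed
  define a where "a n = \<phi> (ee n) (\<epsilon> * n)" for n
  have anz: "a n \<noteq> 0" for n
  proof -
    obtain k where "\<phi> (ee n) k \<noteq> 0" using vnz[of n] by auto
    then show ?thesis using supp unfolding a_def by metis
  qed
  have phie: "\<phi> (ee n) = (\<lambda>k. a n * ee (\<epsilon> * n) k)" for n
  proof (rule ext)
    fix k show "\<phi> (ee n) k = a n * ee (\<epsilon> * n) k"
      using supp[of n k] unfolding a_def ee_def by auto
  qed
  have key: "f1 m n * a (m+n) = a m * a n * f2 (\<epsilon>*m) (\<epsilon>*n)" for m n
  proof -
    have H: "\<phi> (graded_mult f1 (ee m) (ee n)) = graded_mult f2 (\<phi> (ee m)) (\<phi> (ee n))"
      using hom ee_ws by blast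
    have "\<phi> (graded_mult f1 (ee m) (ee n)) = (\<lambda>k. f1 m n * \<phi> (ee (m+n)) k)"
      unfolding gm_basis using lin_scale[OF lin ee_ws] by simp
    then have l: "\<phi> (graded_mult f1 (ee m) (ee n)) (\<epsilon>*(m+n)) = f1 m n * a (m+n)"
      unfolding a_def by simp
    have d: "\<epsilon>*(m+n) - \<epsilon>*m = \<epsilon>*n" by (simp add: algebra_simps)
    have "graded_mult f2 (\<phi> (ee m)) (\<phi> (ee n)) (\<epsilon>*(m+n)) = a m * a n * f2 (\<epsilon>*m) (\<epsilon>*n)"
      unfolding phie[of m] phie[of n] gm_single d by (simp add: ee_def)
    then show ?thesis using H l by metis
  qed
  have rel: "a (m+n) = of_int \<epsilon> * a m * a n" if mn: "m \<noteq> n" for m n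
  proof -
    have "of_int (n-m) * a (m+n) = (f1 m n - f1 n m) * a (m+n)" using c1[of m n] by simp
    also have "\<dots> = f1 m n * a (m+n) - f1 n m * a (n+m)" by (simp add: algebra_simps add.commute)
    also have "\<dots> = a m * a n * f2 (\<epsilon>*m) (\<epsilon>*n) - a n * a m * f2 (\<epsilon>*n) (\<epsilon>*m)"
      using key[of m n] key[of n m] by simp
    also have "\<dots> = a m * a n * (f2 (\<epsilon>*m) (\<epsilon>*n) - f2 (\<epsilon>*n) (\<epsilon>*m))" by (simp add: algebra_simps)
    also have "\<dots> = a m * a n * of_int (\<epsilon>*n - \<epsilon>*m)" using c2[of "\<epsilon>*m" "\<epsilon>*n"] by simp
    also have "\<dots> = of_int (n-m) * (of_int \<epsilon> * a m * a n)" by (simp add: algebra_simps)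
    finally have "of_int (n-m) * a (m+n) = of_int (n-m) * (of_int \<epsilon> * a m * a n)" .
    moreover have "of_int (n-m) \<noteq> (0::complex)" using mn by simp
    ultimately show ?thesis by simp
  qed
  define b where "b n = of_int \<epsilon> * a n" for n
  have bnz: "b n \<noteq> 0" for n unfolding b_def using anz e2 by auto
  have bm: "b (m+n) = b m * b n" if "m \<noteq> n" for m n
  proof -
    have "b (m+n) = (of_int \<epsilon> * of_int \<epsilon>) * a m * a n" unfolding b_def using rel[OF that] by (simp add: algebra_simps)
    also have "\<dots> = b m * b n * (of_int \<epsilon> * of_int \<epsilon>)" unfolding b_def using e2c by (simp add: algebra_simps)
    finally show ?thesis using e2c by simp
  qed
  have ball: "b (m+n) = b m * b n" for m n by (rule diag[OF bnz bm])
  have fin: "f1 m n = of_int \<epsilon> * f2 (\<epsilon>*m) (\<epsilon>*n)" for m n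
  proof -
    have "a m * a n = b m * b n" unfolding b_def using e2c by (simp add: algebra_simps)
    also have "\<dots> = of_int \<epsilon> * a (m+n)" using ball[of m n] unfolding b_def by (rule sym)
    finally have "f1 m n * a (m+n) = (of_int \<epsilon> * f2 (\<epsilon>*m) (\<epsilon>*n)) * a (m+n)"
      using key[of m n] by (simp add: algebra_simps)
    then show ?thesis using anz[of "m+n"] by simp
  qed
  show ?thesis
  proof (cases "\<epsilon> = 1")
    case True then show ?thesis using fin by simp
  next
    case False
    then have "\<epsilon> = -1" using eps unfolding \<epsilon>_def by simp
    then show ?thesis using fin by simp
  qed
qed

end
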